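(* For every integer $t$, \[ \sum_{n=1}^\infty\binom{2n}{n}\frac{O_n}{8^n}L_{n+t}=\sqrt2\,L_{t+1}\ln\alpha+\frac{\sqrt{10}\,\ln2}{2}F_{t+1},\qquad \sum_{n=1}^\infty\binom{2n}{n}\frac{O_n}{8^n}F_{n+t}=\sqrt2\,F_{t+1}\ln\alpha+\frac{\ln2}{\sqrt{10}}L_{t+1}, \] and, more generally, for every gibonacci sequence $(G_j)=(G_j(a,b))$, \[ \sum_{n=1}^\infty\binom{2n}{n}\frac{O_n}{8^n}G_{n+t}=\sqrt2\,G_{t+1}\ln\alpha+\frac{\ln2}{\sqrt{10}}\bigl(G_{t+2}+G_t\bigr). \]
   Context: $O_n=\sum_{j=1}^n\frac1{2j-1}$. $F_n$ and $L_n$ are the Fibonacci and Lucas numbers ($F_0=0,F_1=1$, $L_0=2,L_1=1$, $u_n=u_{n-1}+u_{n-2}$), extended to all integers by the recurrence. $\alpha=(1+\sqrt5)/2$, $\beta=-1/\alpha$, so $F_n=(\alpha^n-\beta^n)/(\alpha-\beta)$, $L_n=\alpha^n+\beta^n$. For numbers $a,b$ not both zero, the gibonacci sequence $G_j=G_j(a,b)$ is defined by $G_0=a$, $G_1=b$, $G_j=G_{j-1}+G_{j-2}$, extended to negative indices by $G_{-j}=G_{-(j-2)}-G_{-(j-1)}$; equivalently $G_j=\frac{(b-a\beta)\alpha^j+(a\alpha-b)\beta^j}{\alpha-\beta}$. *)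

theory Defs
  imports Complex_Main
begin

definition odd_harm :: "nat \<Rightarrow> real" where
  "odd_harm n = (\<Sum>j=1..n. 1 / (2 * real j - 1))"

definition gr_alpha :: real where "gr_alpha = (1 + sqrt 5) / 2"

fun gib_pos :: "real \<Rightarrow> real \<Rightarrow> nat \<Rightarrow> real" where
  "gib_pos a b 0 = a"
| "gib_pos a b (Suc 0) = b"
| "gib_pos a b (Suc (Suc n)) = gib_pos a b (Suc n) + gib_pos a b n"

fun gib_neg :: "real \<Rightarrow> real \<Rightarrow> nat \<Rightarrow> real" where
  "gib_neg a b 0 = a"
| "gib_neg a b (Suc 0) = b - a"
| "gib_neg a b (Suc (Suc n)) = gib_neg a b n - gib_neg a b (Suc n)"

definition gib :: "real \<Rightarrow> real \<Rightarrow> int \<Rightarrow> real" where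
  "gib a b k = (if 0 \<le> k then gib_pos a b (nat k) else gib_neg a b (nat (- k)))"

definition Fibz :: "int \<Rightarrow> real" where "Fibz = gib 0 1"
definition Lucz :: "int \<Rightarrow> real" where "Lucz = gib 2 1"

end

theory Submission
  imports Defs "HOL-Analysis.Analysis"
begin

abbreviation "s5 \<equiv> sqrt 5"
definition gb :: real where "gb = (1 - sqrt 5) / 2"

lemma s5sq: "s5 * s5 = 5" by simp
lemma s5pos: "s5 > 2" by (simp add: real_less_rsqrt)
lemma al_sq: "gr_alpha * gr_alpha = gr_alpha + 1"
  unfolding gr_alpha_def using s5sq by (simp add: field_simps)
lemma gb_eq: "gb = 1 - gr_alpha" unfolding gb_def gr_alpha_def by (simp add: field_simps)
lemma al_gb: "gr_alpha * gb = -1" unfolding gb_eq using al_sq by (simp add: algebra_simps)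
lemma s5lt3: "s5 < 3"
proof -
  have "sqrt 5 < sqrt (3^2)" by (intro real_sqrt_less_mono) simp
  then show ?thesis by simp
qed
lemma al_bounds: "1 < gr_alpha" "gr_alpha < 2"
  unfolding gr_alpha_def using s5pos s5lt3 by auto
lemma al_minus_gb: "gr_alpha - gb = s5" unfolding gb_def gr_alpha_def by (simp add: field_simps)
lemma fcts: "s5* s5 - 5 = 0" "2*gr_alpha - 1 - s5 = 0" "2*gb - 1 + s5 = 0"
  unfolding gr_alpha_def gb_def by (simp_all add: field_simps)

lemma gb_sq: "gb * gb = gb + 1" using fcts by algebra

lemma hlp: "a*5 + gb*(a* s5) = gr_alpha*(a* s5)"
proof -
  have "gr_alpha*(a* s5) = (gb + s5)*(a* s5)" using al_minus_gb by simp
  also have "\<dots> = gb*(a* s5) + a*(s5* s5)" by (simp add: algebra_simps)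
  finally show ?thesis by simp
qed

lemma gib_pos_closed:
  "gib_pos a b n = (b - a*gb)/s5 * gr_alpha^n + (a*gr_alpha - b)/s5 * gb^n"
proof (induction a b n rule: gib_pos.induct)
  case (1 a b) show ?case using s5pos apply (simp add: field_simps) using fcts by algebra
next
  case (2 a b) show ?case using s5pos apply (simp add: field_simps) using fcts by algebra
next
  case (3 a b n)
  have "gr_alpha^Suc (Suc n) = (gr_alpha*gr_alpha) * gr_alpha^n" by simp
  also have "\<dots> = (gr_alpha+1) * gr_alpha^n" using al_sq by simp
  also have "\<dots> = gr_alpha^Suc n + gr_alpha^n" by (simp add: algebra_simps)
  finally have e1: "gr_alpha^Suc (Suc n) = gr_alpha^Suc n + gr_alpha^n" .
  have "gb^Suc (Suc n) = (gb*gb) * gb^n" by simp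
  also have "\<dots> = (gb+1) * gb^n" using gb_sq by simp
  also have "\<dots> = gb^Suc n + gb^n" by (simp add: algebra_simps)
  finally have e2: "gb^Suc (Suc n) = gb^Suc n + gb^n" .
  show ?case by (simp only: gib_pos.simps e1 e2 3) (simp add: field_simps)
qed

lemma gib_neg_closed:
  "gib_neg a b n = (b - a*gb)/s5 * (inverse gr_alpha)^n + (a*gr_alpha - b)/s5 * (inverse gb)^n"
proof -
  have ia: "inverse gr_alpha = - gb" by (rule inverse_unique) (use al_gb in simp)
  have ib: "inverse gb = - gr_alpha" by (rule inverse_unique) (use al_gb in \<open>simp add: mult.commute\<close>)
  show ?thesis unfolding ia ib
  proof (induction a b n rule: gib_neg.induct)
    case (1 a b) then show ?case using s5pos by (simp add: field_simps hlp)
  next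
    case (2 a b) show ?case using s5pos apply (simp add: field_simps) using fcts by algebra
  next
    case (3 a b n)
    have "(-gb)^Suc (Suc n) = (gb*gb) * (-gb)^n" by simp
    also have "\<dots> = (gb+1) * (-gb)^n" using gb_sq by simp
    also have "\<dots> = (-gb)^n - (-gb)^Suc n" by (simp add: algebra_simps)
    finally have e1: "(-gb)^Suc (Suc n) = (-gb)^n - (-gb)^Suc n" .
    have "(-gr_alpha)^Suc (Suc n) = (gr_alpha*gr_alpha) * (-gr_alpha)^n" by simp
    also have "\<dots> = (gr_alpha+1) * (-gr_alpha)^n" using al_sq by simp
    also have "\<dots> = (-gr_alpha)^n - (-gr_alpha)^Suc n" by (simp add: algebra_simps)
    finally have e2: "(-gr_alpha)^Suc (Suc n) = (-gr_alpha)^n - (-gr_alpha)^Suc n" .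
    show ?case by (simp only: gib_neg.simps e1 e2 3) (simp add: field_simps)
  qed
qed

lemma gib_closed:
  "gib a b k = (b - a*gb)/s5 * gr_alpha powi k + (a*gr_alpha - b)/s5 * gb powi k"
proof (cases "0 \<le> k")
  case True
  then obtain n where "k = int n" by (metis nonneg_eq_int)
  then show ?thesis unfolding gib_def using gib_pos_closed by simp
next
  case False
  then obtain n where "k = - int n" by (metis neg_int_cases not_le less_imp_le)
  then show ?thesis unfolding gib_def using gib_neg_closed[of a b n] False
    by (simp add: power_int_minus power_inverse)
qed



definition gf :: "real \<Rightarrow> real" where "gf x = - ln (1 - 4*x) / 2 * (1 - 4*x) powr (-1/2)"

lemma gf_alt: assumes "0 < 1 - 4*x" shows "gf x = - ln (1 - 4*x) / (2 * sqrt (1 - 4*x))"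
proof -
  have "(1 - 4*x) powr (-1/2) = 1 / (1 - 4*x) powr (1/2)"
    using powr_minus_divide[of "1 - 4*x" "1/2"] by simp
  also have "\<dots> = 1 / sqrt (1 - 4*x)" using assms by (simp add: powr_half_sqrt)
  finally show ?thesis unfolding gf_def by simp
qed

lemma lnal: "ln (gr_alpha * gr_alpha) = 2 * ln gr_alpha"
  using al_bounds by (simp add: ln_mult)

lemma r2: "sqrt 2 * sqrt 2 - 2 = 0" by simp

lemma gf_al: "gf (gr_alpha/8) = sqrt 2 * gr_alpha * ln gr_alpha + gr_alpha * ln 2 / sqrt 2"
proof -
  have a0: "gr_alpha > 1" using al_bounds by simp
  have e: "1 - 4*(gr_alpha/8) = 1 / (2 * (gr_alpha * gr_alpha))"
    using a0 apply (simp add: field_simps) using fcts by algebra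
  have p: "0 < 1 - 4*(gr_alpha/8)" unfolding e using a0 by simp
  have l: "ln (1 - 4*(gr_alpha/8)) = - (ln 2 + 2 * ln gr_alpha)"
    unfolding e using a0 by (simp add: ln_div ln_mult lnal)
  have q: "sqrt (1 - 4*(gr_alpha/8)) = 1 / (sqrt 2 * gr_alpha)"
    unfolding e using a0 by (simp add: real_sqrt_divide real_sqrt_mult)
  show ?thesis unfolding gf_alt[OF p] l q using a0
    by (simp add: field_simps)
qed

lemma gf_gb: "gf (gb/8) = sqrt 2 * gb * ln gr_alpha - gb * ln 2 / sqrt 2"
proof -
  have a0: "gr_alpha > 1" using al_bounds by simp
  have e: "1 - 4*(gb/8) = (gr_alpha * gr_alpha) / 2"
    apply (simp add: field_simps) using fcts by algebra
  have p: "0 < 1 - 4*(gb/8)" unfolding e using a0 by simp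
  have l: "ln (1 - 4*(gb/8)) = 2 * ln gr_alpha - ln 2"
    unfolding e using a0 by (simp add: ln_div lnal)
  have q: "sqrt (1 - 4*(gb/8)) = gr_alpha / sqrt 2"
    unfolding e using a0 by (simp add: real_sqrt_divide real_sqrt_mult)
  have b: "gr_alpha * gb + 1 = 0" using al_gb by simp
  show ?thesis unfolding gf_alt[OF p] l q using a0
    apply (simp add: field_simps) using r2 b by algebra
qed



definition cb :: "nat \<Rightarrow> real" where "cb n = real (2*n choose n)"
definition lc :: "nat \<Rightarrow> real" where "lc n = 4^n / (2 * real n)"
definition ac :: "nat \<Rightarrow> real" where "ac n = cb n * odd_harm n"

lemma cb_rec: "real (Suc n) * cb (Suc n) = 2 * (2 * real n + 1) * cb n"
proof -
  have a: "Suc n * (Suc (Suc (2*n)) choose Suc n) = Suc (Suc (2*n)) * (Suc (2*n) choose n)"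
    by (rule Suc_times_binomial)
  have b: "Suc n * (Suc (2*n) choose Suc n) = Suc (2*n) * (2*n choose n)"
    by (rule Suc_times_binomial)
  have c: "(Suc (2*n) choose Suc n) = (Suc (2*n) choose n)"
    using binomial_symmetric[of n "Suc (2*n)"] by simp
  define Y where "Y = real (Suc (Suc (2*n)) choose Suc n)"
  define Z where "Z = real (Suc (2*n) choose n)"
  define W where "W = real (2*n choose n)"
  have a': "real (Suc n) * Y = (2 * real (Suc n)) * Z"
    unfolding Y_def Z_def using arg_cong[OF a, of real] by (simp only: of_nat_mult) simp
  have b': "real (Suc n) * Z = (2 * real n + 1) * W"
    unfolding W_def Z_def using arg_cong[OF b, of real] unfolding c by (simp only: of_nat_mult) simp
  have "real (Suc n) * Y = 2 * (real (Suc n) * Z)" using a' by simp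
  also have "\<dots> = 2 * (2 * real n + 1) * W" using b' by simp
  finally have "real (Suc n) * Y = 2 * (2 * real n + 1) * W" .
  moreover have "cb (Suc n) = Y" unfolding cb_def Y_def by (simp add: mult_2)
  moreover have "cb n = W" unfolding cb_def W_def by simp
  ultimately show ?thesis by simp
qed

lemma odd_harm_Suc: "odd_harm (Suc n) = odd_harm n + 1 / (2 * real n + 1)"
  unfolding odd_harm_def by simp

lemma ac_rec: "real (Suc n) * ac (Suc n) = 2 * (2 * real n + 1) * ac n + 2 * cb n"
proof -
  have "real (Suc n) * ac (Suc n) = (real (Suc n) * cb (Suc n)) * odd_harm (Suc n)"
    unfolding ac_def by simp
  also have "\<dots> = 2 * (2 * real n + 1) * cb n * (odd_harm n + 1 / (2 * real n + 1))"
    using cb_rec[of n] by (simp add: odd_harm_Suc)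
  also have "\<dots> = 2 * (2 * real n + 1) * ac n + 2 * cb n"
    unfolding ac_def by (simp add: field_simps)
  finally show ?thesis .
qed

definition bc :: "nat \<Rightarrow> real" where "bc n = (\<Sum>i\<le>n. lc i * cb (n - i))"

lemma bc_rec: "real (Suc n) * bc (Suc n) = 2 * (2 * real n + 1) * bc n + 2 * cb n"
proof -
  have split: "real (Suc n) * bc (Suc n) =
     (\<Sum>i\<le>Suc n. real i * lc i * cb (Suc n - i)) + (\<Sum>i\<le>Suc n. lc i * (real (Suc n - i) * cb (Suc n - i)))"
    unfolding bc_def sum_distrib_left sum.distrib[symmetric]
    by (intro sum.cong refl) (auto simp: algebra_simps of_nat_diff)
  have il: "real (Suc i) * lc (Suc i) = 4 * (real i * lc i) + (if i = 0 then 2 else 0)" for i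
    unfolding lc_def by (cases "i = 0") (auto simp: field_simps)
  have A: "(\<Sum>i\<le>Suc n. real i * lc i * cb (Suc n - i)) = (\<Sum>i\<le>n. 4 * (real i * lc i * cb (n - i))) + 2 * cb n"
  proof -
    have "(\<Sum>i\<le>Suc n. real i * lc i * cb (Suc n - i)) = (\<Sum>i\<le>n. real (Suc i) * lc (Suc i) * cb (n - i))"
      by (subst sum.atMost_Suc_shift) simp
    also have "\<dots> = (\<Sum>i\<le>n. 4 * (real i * lc i * cb (n - i)) + (if i = 0 then 2 * cb (n - i) else 0))"
      by (intro sum.cong refl) (simp only: il distrib_right, simp)
    also have "\<dots> = (\<Sum>i\<le>n. 4 * (real i * lc i * cb (n - i))) + 2 * cb n"
      by (simp add: sum.distrib)
    finally show ?thesis .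
  qed
  have B: "(\<Sum>i\<le>Suc n. lc i * (real (Suc n - i) * cb (Suc n - i))) = (\<Sum>i\<le>n. lc i * (2 * (2 * (real n - real i) + 1) * cb (n - i)))"
  proof -
    have "(\<Sum>i\<le>Suc n. lc i * (real (Suc n - i) * cb (Suc n - i))) = (\<Sum>i\<le>n. lc i * (real (Suc n - i) * cb (Suc n - i)))"
      by simp
    also have "\<dots> = (\<Sum>i\<le>n. lc i * (2 * (2 * (real n - real i) + 1) * cb (n - i)))"
    proof (intro sum.cong refl)
      fix i assume "i \<in> {..n}"
      then have "Suc n - i = Suc (n - i)" "real (n - i) = real n - real i" by (auto simp: of_nat_diff)
      then show "lc i * (real (Suc n - i) * cb (Suc n - i)) = lc i * (2 * (2 * (real n - real i) + 1) * cb (n - i))"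
        using cb_rec[of "n - i"] by simp
    qed
    finally show ?thesis .
  qed
  have "real (Suc n) * bc (Suc n) = (\<Sum>i\<le>n. 4 * (real i * lc i * cb (n - i)) + lc i * (2 * (2 * (real n - real i) + 1) * cb (n - i))) + 2 * cb n"
    using split A B by (simp add: sum.distrib)
  also have "\<dots> = (\<Sum>i\<le>n. 2 * (2 * real n + 1) * (lc i * cb (n - i))) + 2 * cb n"
    by (intro arg_cong2[where f="(+)"] sum.cong refl) (simp add: algebra_simps)
  also have "\<dots> = 2 * (2 * real n + 1) * bc n + 2 * cb n"
    unfolding bc_def sum_distrib_left by simp
  finally show ?thesis .
qed

lemma bc_ac: "bc n = ac n"
proof (induction n)
  case 0 then show ?case by (simp add: bc_def ac_def lc_def odd_harm_def)
next
  case (Suc n)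
  have "real (Suc n) * bc (Suc n) = real (Suc n) * ac (Suc n)"
    using bc_rec ac_rec Suc by simp
  then show ?case by (metis mult_cancel_left of_nat_eq_0_iff nat.distinct(1))
qed



lemma gch_step: "real (Suc k) * (a gchoose Suc k) = (a gchoose k) * (a - real k)"
proof -
  have "fact (Suc k) * (a gchoose Suc k) = (\<Prod>i = 0..<Suc k. a - of_nat i)"
    by (rule gbinomial_mult_fact)
  also have "\<dots> = (\<Prod>i = 0..<k. a - of_nat i) * (a - real k)" by simp
  also have "\<dots> = fact k * (a gchoose k) * (a - real k)" by (simp add: gbinomial_mult_fact)
  finally have "fact k * (real (Suc k) * (a gchoose Suc k)) = fact k * ((a gchoose k) * (a - real k))"
    by (simp only: fact_Suc of_nat_mult mult_ac)
  then show ?thesis by (metis mult_cancel_left fact_nonzero)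
qed

lemma cb_gchoose: "((-1/2::real) gchoose n) * (-4)^n = cb n"
proof (induction n)
  case 0 then show ?case by (simp add: cb_def)
next
  case (Suc n)
  have "real (Suc n) * (((-1/2::real) gchoose Suc n) * (-4)^Suc n) = (real (Suc n) * ((-1/2::real) gchoose Suc n)) * (-4)^Suc n"
    by (simp only: mult.assoc)
  also have "\<dots> = ((-1/2::real) gchoose n) * (-1/2 - real n) * (-4)^Suc n"
    by (simp only: gch_step)
  also have "\<dots> = 2 * (2 * real n + 1) * (((-1/2::real) gchoose n) * (-4)^n)"
    by (simp add: algebra_simps)
  also have "\<dots> = real (Suc n) * cb (Suc n)" using Suc cb_rec by simp
  finally show ?case by (metis mult_cancel_left of_nat_eq_0_iff nat.distinct(1))
qed

lemma cb_sums: assumes "\<bar>x\<bar> < 1/4" shows "(\<lambda>n. cb n * x^n) sums ((1 - 4*x) powr (-1/2))"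
proof -
  have "\<bar>-4*x\<bar> < 1" using assms by simp
  from gen_binomial_real[OF this, of "-1/2"]
  have "(\<lambda>n. ((-1/2) gchoose n) * (-4*x)^n) sums (1 + (-4*x)) powr (-1/2)" .
  moreover have "((-1/2) gchoose n) * (-4*x)^n = cb n * x^n" for n
  proof -
    have "(-4*x)^n = (-4)^n * x^n" by (rule power_mult_distrib)
    then show ?thesis using cb_gchoose[of n] by (metis mult.assoc)
  qed
  ultimately show ?thesis by simp
qed

lemma lc_sums: assumes "\<bar>x\<bar> < 1/4" shows "(\<lambda>n. lc n * x^n) sums (- ln (1 - 4*x) / 2)"
proof -
  have "\<bar>-4*x\<bar> < 1" using assms by simp
  from sums_mult[OF ln_series'[OF this], of "-1/2"]
  have "(\<lambda>n. -1/2 * (- ((- (-4*x))^n) / real n)) sums (-1/2 * ln (1 + (-4*x)))" .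
  moreover have "-1/2 * (- ((- (-4*x))^n) / real n) = lc n * x^n" for n
    unfolding lc_def by (simp add: power_mult_distrib)
  ultimately show ?thesis by simp
qed


lemma ac_sums: assumes "\<bar>x\<bar> < 1/4" shows "(\<lambda>n. ac n * x^n) sums gf x"
proof -
  have ax: "\<bar>\<bar>x\<bar>\<bar> < 1/4" using assms by simp
  have "summable (\<lambda>n. lc n * \<bar>x\<bar>^n)" using lc_sums[OF ax] by (rule sums_summable)
  moreover have "norm (lc n * x^n) = lc n * \<bar>x\<bar>^n" for n
    unfolding lc_def by (simp add: abs_mult power_abs)
  ultimately have s1: "summable (\<lambda>n. norm (lc n * x^n))" by simp
  have "summable (\<lambda>n. cb n * \<bar>x\<bar>^n)" using cb_sums[OF ax] by (rule sums_summable)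
  moreover have "norm (cb n * x^n) = cb n * \<bar>x\<bar>^n" for n
    unfolding cb_def by (simp add: abs_mult power_abs)
  ultimately have s2: "summable (\<lambda>n. norm (cb n * x^n))" by simp
  from Cauchy_product_sums[OF s1 s2]
  have "(\<lambda>k. \<Sum>i\<le>k. lc i * x^i * (cb (k - i) * x^(k - i))) sums ((\<Sum>k. lc k * x^k) * (\<Sum>k. cb k * x^k))" .
  moreover have "(\<Sum>i\<le>k. lc i * x^i * (cb (k - i) * x^(k - i))) = ac k * x^k" for k
  proof -
    have "(\<Sum>i\<le>k. lc i * x^i * (cb (k - i) * x^(k - i))) = (\<Sum>i\<le>k. lc i * cb (k - i) * x^k)"
    proof (intro sum.cong refl)
      fix i assume "i \<in> {..k}"
      then have "x^i * x^(k-i) = x^k" by (simp add: power_add[symmetric])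
      then show "lc i * x^i * (cb (k - i) * x^(k - i)) = lc i * cb (k - i) * x^k"
        by (metis mult.assoc mult.left_commute)
    qed
    also have "\<dots> = bc k * x^k" unfolding bc_def by (simp add: sum_distrib_right)
    finally show ?thesis by (simp add: bc_ac)
  qed
  ultimately show ?thesis
    using sums_unique[OF lc_sums[OF assms]] sums_unique[OF cb_sums[OF assms]]
    unfolding gf_def by (simp add: mult.commute)
qed




lemma gb_bounds: "\<bar>gb\<bar> < 1" using al_bounds gb_eq by auto
lemma gb_nz: "gb \<noteq> 0" using al_gb by auto

lemma gen_sum:
  assumes ab: "\<not> (a = 0 \<and> b = 0)"
  shows "(\<lambda>m. let n = Suc m in real (2*n choose n) * odd_harm n / 8^n * gib a b (int n + t))
        sums (sqrt 2 * gib a b (t+1) * ln gr_alpha + ln 2 / sqrt 10 * (gib a b (t+2) + gib a b t))"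
proof -
  define A where "A = (b - a*gb)/s5"
  define B where "B = (a*gr_alpha - b)/s5"
  define P where "P = gr_alpha powi t"
  define Q where "Q = gb powi t"
  have an: "gr_alpha \<noteq> 0" using al_bounds by simp
  have cl: "gib a b k = A * gr_alpha powi k + B * gb powi k" for k
    unfolding A_def B_def by (rule gib_closed)
  define f where "f n = real (2*n choose n) * odd_harm n / 8^n * gib a b (int n + t)" for n :: nat
  have fe: "f n = (A*P) * (ac n * (gr_alpha/8)^n) + (B*Q) * (ac n * (gb/8)^n)" for n
  proof -
    have "gr_alpha powi (int n + t) = gr_alpha^n * P" unfolding P_def using an by (simp add: power_int_add)
    moreover have "gb powi (int n + t) = gb^n * Q" unfolding Q_def using gb_nz by (simp add: power_int_add)
    ultimately show ?thesis unfolding f_def cl ac_def cb_def by (simp add: power_divide field_simps)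
  qed
  have s1: "(\<lambda>n. ac n * (gr_alpha/8)^n) sums gf (gr_alpha/8)" using al_bounds by (intro ac_sums) simp
  have s2: "(\<lambda>n. ac n * (gb/8)^n) sums gf (gb/8)" using gb_bounds by (intro ac_sums) simp
  have "f sums ((A*P) * gf (gr_alpha/8) + (B*Q) * gf (gb/8))"
    unfolding fe by (intro sums_add sums_mult s1 s2)
  moreover have "f 0 = 0" unfolding f_def odd_harm_def by simp
  ultimately have "(\<lambda>m. f (Suc m)) sums ((A*P) * gf (gr_alpha/8) + (B*Q) * gf (gb/8))"
    by (simp add: sums_Suc_iff)
  moreover have "(A*P) * gf (gr_alpha/8) + (B*Q) * gf (gb/8) =
      sqrt 2 * gib a b (t+1) * ln gr_alpha + ln 2 / sqrt 10 * (gib a b (t+2) + gib a b t)"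
  proof -
    have g1: "gib a b (t+1) = A*P*gr_alpha + B*Q*gb"
      unfolding cl P_def Q_def using an gb_nz by (simp add: power_int_add_1)
    have g2: "gib a b (t+2) = A*P*(gr_alpha*gr_alpha) + B*Q*(gb*gb)"
      unfolding cl P_def Q_def using an gb_nz by (simp add: power_int_add power2_eq_square)
    have g0: "gib a b t = A*P + B*Q" unfolding cl P_def Q_def by simp
    have s10: "sqrt 10 = sqrt 2 * s5" by (simp flip: real_sqrt_mult)
    show ?thesis unfolding g0 g1 g2 gf_al gf_gb s10
      apply (simp add: field_simps) using fcts r2 by algebra
  qed
  ultimately show ?thesis unfolding f_def Let_def by simp
qed



lemma gib_shift:
  "gib a b (t+1) = (b - a*gb)/s5 * (gr_alpha powi t * gr_alpha) + (a*gr_alpha - b)/s5 * (gb powi t * gb)"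
  "gib a b (t+2) = (b - a*gb)/s5 * (gr_alpha powi t * (gr_alpha*gr_alpha)) + (a*gr_alpha - b)/s5 * (gb powi t * (gb*gb))"
  using al_bounds gb_nz by (simp_all add: gib_closed power_int_add_1 power_int_add power2_eq_square)

lemma luc_id: "Lucz (t+2) + Lucz t = 5 * Fibz (t+1)"
  unfolding Lucz_def Fibz_def gib_shift unfolding gib_closed[of _ _ t] apply (simp add: field_simps) using fcts by algebra

lemma fib_id: "Fibz (t+2) + Fibz t = Lucz (t+1)"
  unfolding Lucz_def Fibz_def gib_shift unfolding gib_closed[of _ _ t] apply (simp add: field_simps) using fcts by algebra

theorem theorem12:
  shows "(\<forall>t::int.
      (\<lambda>m. let n = Suc m in real (2*n choose n) * odd_harm n / 8^n * Lucz (int n + t))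
        sums (sqrt 2 * Lucz (t+1) * ln gr_alpha + sqrt 10 * ln 2 / 2 * Fibz (t+1))
    \<and> (\<lambda>m. let n = Suc m in real (2*n choose n) * odd_harm n / 8^n * Fibz (int n + t))
        sums (sqrt 2 * Fibz (t+1) * ln gr_alpha + ln 2 / sqrt 10 * Lucz (t+1)))
   \<and> (\<forall>(a::real) (b::real) (t::int). \<not> (a = 0 \<and> b = 0) \<longrightarrow>
      (\<lambda>m. let n = Suc m in real (2*n choose n) * odd_harm n / 8^n * gib a b (int n + t))
        sums (sqrt 2 * gib a b (t+1) * ln gr_alpha + ln 2 / sqrt 10 * (gib a b (t+2) + gib a b t)))"
proof (intro conjI allI impI)
  fix t :: int
  have "sqrt 10 * ln 2 / 2 * Fibz (t+1) = ln 2 / sqrt 10 * (Lucz (t+2) + Lucz t)"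
  proof -
    have "sqrt 10 * sqrt 10 = 10" by simp
    then show ?thesis unfolding luc_id by (simp add: field_simps)
  qed
  then show "(\<lambda>m. let n = Suc m in real (2*n choose n) * odd_harm n / 8^n * Lucz (int n + t))
        sums (sqrt 2 * Lucz (t+1) * ln gr_alpha + sqrt 10 * ln 2 / 2 * Fibz (t+1))"
    using gen_sum[of 2 1 t] unfolding Lucz_def by simp
  show "(\<lambda>m. let n = Suc m in real (2*n choose n) * odd_harm n / 8^n * Fibz (int n + t))
        sums (sqrt 2 * Fibz (t+1) * ln gr_alpha + ln 2 / sqrt 10 * Lucz (t+1))"
    using gen_sum[of 0 1 t] fib_id[of t] unfolding Lucz_def Fibz_def by simp
next
  fix a b :: real and t :: int
  assume "\<not> (a = 0 \<and> b = 0)"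
  then show "(\<lambda>m. let n = Suc m in real (2*n choose n) * odd_harm n / 8^n * gib a b (int n + t))
        sums (sqrt 2 * gib a b (t+1) * ln gr_alpha + ln 2 / sqrt 10 * (gib a b (t+2) + gib a b t))"
    by (rule gen_sum)
qed

end
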